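(* Let $\mathcal{T}=\{T(t,s):t\ge s\}$ be a linear evolution process in a Banach space $X$, $f:\mathbb{R}\times X\to X$ continuous and differentiable in $x$ with continuous derivative, and assume the mild solutions $y(t,s;y_s)=T(t,s)y_s+\int_s^tT(t,\tau)f(\tau,y(\tau,s;y_s))d\tau$ exist for all $t\ge s$, defining the nonlinear evolution process $\mathcal{S}_f$, $S_f(t,s)y_s=y(t,s;y_s)$. Let $\xi$ be a global solution of $\mathcal{S}_f$ which is nonuniform hyperbolic, i.e. its linearized process $\mathcal{L}_f$ admits a nonuniform exponential dichotomy with projections $\{Q(s)\}$, bound $K(s)=De^{\nu|s|}$ and exponent $\alpha>\nu$. Then: (a) every bounded global solution $\varphi$ of $\mathcal{S}_f$ satisfies $$\varphi(t)=\int_{-\infty}^{+\infty}G_f(t,\tau)\big[f(\tau,\varphi(\tau))-D_xf(\tau,\xi(\tau))\varphi(\tau)\big]d\tau,\quad t\in\mathbb{R},$$ where $G_f(t,s)=L_f(t,s)(Id_X-Q(s))$ for $t\ge s$ and $G_f(t,s)=-L_f(t,s)Q(s)$ for $t<s$; (b) if moreover $\xi$ is bounded and $$\rho(\epsilon):=\sup_{0<\|x\|\le\epsilon}\sup_{t\in\mathbb{R}}\frac{e^{\nu|t|}\|f(t,\xi(t)+x)-f(t,\xi(t))-D_xf(t,\xi(t))x\|}{\|x\|}\to0\ \text{ as }\epsilon\to0,$$ then $\xi$ is isolated in $C_b(\mathbb{R},X)$: there is $\epsilon>0$ such that $\xi$ is the only bounded global solution $\varphi$ of $\mathcal{S}_f$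 with $\sup_{t\in\mathbb{R}}\|\varphi(t)-\xi(t)\|\le\epsilon$.
   Context: A global solution of an evolution process $\mathcal{S}$ is a map $\xi:\mathbb{R}\to X$ with $S(t,s)\xi(s)=\xi(t)$ for all $t\ge s$. The linearized evolution process of $\mathcal{S}_f$ along $\xi$ is the linear evolution process $\mathcal{L}_f=\{L_f(t,s):t\ge s\}$ satisfying $L_f(t,s)=T(t,s)+\int_s^tT(t,\tau)D_xf(\tau,\xi(\tau))L_f(\tau,s)d\tau$; $\xi$ is a nonuniform hyperbolic solution if $\mathcal{L}_f$ admits a nonuniform exponential dichotomy. A linear evolution process $\{S(t,s)\}$ admits a nonuniform exponential dichotomy if there is a family of bounded projections $\{Q(t)\}_{t\in\mathbb{R}}$ with: (i) $Q(t)S(t,s)=S(t,s)Q(s)$ for $t\ge s$; (ii) $S(t,s)|_{R(Q(s))}:R(Q(s))\to R(Q(t))$ is an isomorphism for $t\ge s$, with inverse denoted $S(s,t)$; (iii) there are a continuous $K:\mathbb{R}\to[1,\infty)$ with $K(s)\le De^{\nu|s|}$ ($D\ge1$, $\nu\ge0$) and $\alpha>0$ with $\|S(t,s)(Id-Q(s))\|\le K(s)e^{-\alpha(t-s)}$ for $t\ge s$ and $\|S(t,s)Q(s)\|\le K(s)e^{\alpha(t-s)}$ for $t<s$. $C_b(\mathbb{R},X)$ denotes the bounded continuous functions $\mathbb{R}\to X$ with the sup norm. *)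

theory Defs
  imports "HOL-Analysis.Analysis"
begin

definition evolution_process :: "(real \<Rightarrow> real \<Rightarrow> 'a::real_normed_vector \<Rightarrow> 'a) \<Rightarrow> bool" where
  "evolution_process S \<longleftrightarrow>
     (\<forall>t x. S t t x = x) \<and>
     (\<forall>t \<tau> s x. s \<le> \<tau> \<and> \<tau> \<le> t \<longrightarrow> S t \<tau> (S \<tau> s x) = S t s x) \<and>
     continuous_on {(t, s, x). s \<le> t} (\<lambda>(t, s, x). S t s x)"

definition linear_evolution_process :: "(real \<Rightarrow> real \<Rightarrow> 'a::real_normed_vector \<Rightarrow>\<^sub>L 'a) \<Rightarrow> bool" where
  "linear_evolution_process T \<longleftrightarrow> evolution_process (\<lambda>t s. blinfun_apply (T t s))"

definition global_solution :: "(real \<Rightarrow> real \<Rightarrow> 'a \<Rightarrow> 'a) \<Rightarrow> (real \<Rightarrow> 'a) \<Rightarrow> bool" where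
  "global_solution S \<xi> \<longleftrightarrow> (\<forall>t s. s \<le> t \<longrightarrow> S t s (\<xi> s) = \<xi> t)"

(* Backward operator S(t,s) for t < s on R(Q(s)): inverse of S(s,t) restricted to R(Q(t)). *)
definition back_op :: "(real \<Rightarrow> real \<Rightarrow> 'a::real_normed_vector \<Rightarrow>\<^sub>L 'a) \<Rightarrow> (real \<Rightarrow> 'a \<Rightarrow>\<^sub>L 'a)
    \<Rightarrow> real \<Rightarrow> real \<Rightarrow> 'a \<Rightarrow> 'a" where
  "back_op S Q t s = the_inv_into (range (blinfun_apply (Q t))) (blinfun_apply (S s t))"

definition nonuniform_exp_dichotomy ::
  "(real \<Rightarrow> real \<Rightarrow> 'a::real_normed_vector \<Rightarrow>\<^sub>L 'a) \<Rightarrow> (real \<Rightarrow> 'a \<Rightarrow>\<^sub>L 'a)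
    \<Rightarrow> real \<Rightarrow> real \<Rightarrow> real \<Rightarrow> bool" where
  "nonuniform_exp_dichotomy S Q D \<nu> \<alpha> \<longleftrightarrow>
     D \<ge> 1 \<and> \<nu> \<ge> 0 \<and> \<alpha> > 0 \<and>
     (\<forall>t. Q t o\<^sub>L Q t = Q t) \<and>
     (\<forall>t s. s \<le> t \<longrightarrow> Q t o\<^sub>L S t s = S t s o\<^sub>L Q s) \<and>
     (\<forall>t s. s \<le> t \<longrightarrow>
        bij_betw (blinfun_apply (S t s)) (range (blinfun_apply (Q s))) (range (blinfun_apply (Q t)))) \<and>
     (\<forall>t s x. s \<le> t \<longrightarrow>
        norm (S t s (x - Q s x)) \<le> D * exp (\<nu> * \<bar>s\<bar>) * exp (- \<alpha> * (t - s)) * norm x) \<and>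
     (\<forall>t s x. t < s \<longrightarrow>
        norm (back_op S Q t s (Q s x)) \<le> D * exp (\<nu> * \<bar>s\<bar>) * exp (\<alpha> * (t - s)) * norm x)"

definition green :: "(real \<Rightarrow> real \<Rightarrow> 'a::real_normed_vector \<Rightarrow>\<^sub>L 'a) \<Rightarrow> (real \<Rightarrow> 'a \<Rightarrow>\<^sub>L 'a)
    \<Rightarrow> real \<Rightarrow> real \<Rightarrow> 'a \<Rightarrow> 'a" where
  "green S Q t s x = (if s \<le> t then S t s (x - Q s x) else - back_op S Q t s (Q s x))"

definition rho :: "(real \<Rightarrow> 'a::real_normed_vector \<Rightarrow> 'a) \<Rightarrow> (real \<Rightarrow> 'a \<Rightarrow> 'a \<Rightarrow>\<^sub>L 'a)
    \<Rightarrow> (real \<Rightarrow> 'a) \<Rightarrow> real \<Rightarrow> real \<Rightarrow> ereal" where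
  "rho f Df \<xi> \<nu> \<epsilon> = (SUP (t, x) \<in> {(t, x). 0 < norm x \<and> norm x \<le> \<epsilon>}.
      ereal (exp (\<nu> * \<bar>t\<bar>) * norm (f t (\<xi> t + x) - f t (\<xi> t) - Df t (\<xi> t) x) / norm x))"

end

theory Submission
  imports Defs "HOL-Analysis.Analysis" "HOL-Real_Asymp.Real_Asymp"
begin


lemma quad_const:
  fixes F :: "real \<Rightarrow> 'a::real_normed_vector"
  assumes st: "s0 \<le> t0" and K: "K \<ge> 0"
    and le: "\<And>b a. s0 \<le> b \<Longrightarrow> b \<le> a \<Longrightarrow> a \<le> t0 \<Longrightarrow> norm (F a - F b) \<le> K * (a - b)^2"
  shows "F t0 = F s0"
proof -
  define \<Delta> where "\<Delta> = t0 - s0"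
  have \<Delta>: "\<Delta> \<ge> 0" using st by (simp add: \<Delta>_def)
  have main: "norm (F t0 - F s0) \<le> K * \<Delta>^2 / real n" if n: "n \<ge> 1" for n :: nat
  proof -
    define d where "d = \<Delta> / real n"
    have d: "d \<ge> 0" using \<Delta> n by (simp add: d_def)
    have ind: "k \<le> n \<longrightarrow> norm (F (s0 + real k * d) - F s0) \<le> real k * K * d^2" for k
    proof (induction k)
      case 0 then show ?case by simp
    next
      case (Suc k)
      show ?case
      proof
        assume kn: "Suc k \<le> n"
        have IH: "norm (F (s0 + real k * d) - F s0) \<le> real k * K * d^2" using Suc kn by simp
        have le1: "s0 + real (Suc k) * d \<le> t0"
        proof -
          have "real (Suc k) * d \<le> real n * d" using kn d by (intro mult_right_mono) auto
          also have "\<dots> = \<Delta>" using n by (simp add: d_def)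
          finally show ?thesis by (simp add: \<Delta>_def)
        qed
        have "norm (F (s0 + real (Suc k) * d) - F (s0 + real k * d)) \<le> K * ((s0 + real (Suc k) * d) - (s0 + real k * d))^2"
          by (rule le) (use d le1 in \<open>auto simp: algebra_simps\<close>)
        also have "\<dots> = K * d^2" by (simp add: algebra_simps)
        finally have step: "norm (F (s0 + real (Suc k) * d) - F (s0 + real k * d)) \<le> K * d^2" .
        have "norm (F (s0 + real (Suc k) * d) - F s0) \<le> norm (F (s0 + real (Suc k) * d) - F (s0 + real k * d)) + norm (F (s0 + real k * d) - F s0)"
          by (rule norm_diff_triangle_le[OF order_refl order_refl])
        also have "\<dots> \<le> K * d^2 + real k * K * d^2" using step IH by simp
        also have "\<dots> = real (Suc k) * K * d^2" by (simp add: algebra_simps)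
        finally show "norm (F (s0 + real (Suc k) * d) - F s0) \<le> real (Suc k) * K * d^2" .
      qed
    qed
    have "s0 + real n * d = t0" using n by (simp add: d_def \<Delta>_def)
    with ind[of n] have "norm (F t0 - F s0) \<le> real n * K * d^2" by simp
    also have "\<dots> = K * \<Delta>^2 / real n" using n by (simp add: d_def power2_eq_square field_simps)
    finally show ?thesis .
  qed
  have lim: "((\<lambda>n. K * \<Delta>^2 / real n) \<longlongrightarrow> 0) sequentially"
    by real_asymp
  have "norm (F t0 - F s0) \<le> 0"
    by (rule tendsto_lowerbound[OF lim])
       (use main in \<open>auto simp: eventually_at_top_linorder\<close>)
  then show ?thesis by simp
qed


lemma voc_abstract:
  fixes T L :: "real \<Rightarrow> real \<Rightarrow> 'a::banach \<Rightarrow>\<^sub>L 'a" and B :: "real \<Rightarrow> 'a \<Rightarrow>\<^sub>L 'a"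
    and \<phi> g :: "real \<Rightarrow> 'a"
  assumes st: "s0 \<le> t0" and M: "M \<ge> 0" and R: "R \<ge> 0"
    and TM: "\<And>a b x. s0 \<le> b \<Longrightarrow> b \<le> a \<Longrightarrow> a \<le> t0 \<Longrightarrow> norm (T a b x) \<le> M * norm x"
    and LM: "\<And>a b x. s0 \<le> b \<Longrightarrow> b \<le> a \<Longrightarrow> a \<le> t0 \<Longrightarrow> norm (L a b x) \<le> M * norm x"
    and BM: "\<And>\<tau> y. s0 \<le> \<tau> \<Longrightarrow> \<tau> \<le> t0 \<Longrightarrow> norm (B \<tau> y) \<le> M * norm y"
    and \<phi>R: "\<And>\<tau>. s0 \<le> \<tau> \<Longrightarrow> \<tau> \<le> t0 \<Longrightarrow> norm (\<phi> \<tau>) \<le> R"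
    and gR: "\<And>\<tau>. s0 \<le> \<tau> \<Longrightarrow> \<tau> \<le> t0 \<Longrightarrow> norm (g \<tau>) \<le> R"
    and FR: "\<And>\<tau>. s0 \<le> \<tau> \<Longrightarrow> \<tau> \<le> t0 \<Longrightarrow> norm (B \<tau> (\<phi> \<tau>) + g \<tau>) \<le> R"
    and Lco: "\<And>a b c x. s0 \<le> c \<Longrightarrow> c \<le> b \<Longrightarrow> b \<le> a \<Longrightarrow> a \<le> t0 \<Longrightarrow> L a b (L b c x) = L a c x"
    and Lid: "\<And>a x. L a a x = x"
    and Lint: "\<And>a b y. s0 \<le> b \<Longrightarrow> b \<le> a \<Longrightarrow> a \<le> t0 \<Longrightarrow>
                  (\<lambda>\<tau>. T a \<tau> (B \<tau> (L \<tau> b y))) integrable_on {b..a}"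
    and Leq: "\<And>a b y. s0 \<le> b \<Longrightarrow> b \<le> a \<Longrightarrow> a \<le> t0 \<Longrightarrow>
                  L a b y = T a b y + integral {b..a} (\<lambda>\<tau>. T a \<tau> (B \<tau> (L \<tau> b y)))"
    and \<phi>eq: "\<And>a b. s0 \<le> b \<Longrightarrow> b \<le> a \<Longrightarrow> a \<le> t0 \<Longrightarrow>
                  \<phi> a = T a b (\<phi> b) + integral {b..a} (\<lambda>\<tau>. T a \<tau> (B \<tau> (\<phi> \<tau>) + g \<tau>))"
    and int1: "\<And>a b. s0 \<le> b \<Longrightarrow> b \<le> a \<Longrightarrow> a \<le> t0 \<Longrightarrow> (\<lambda>\<tau>. T a \<tau> (g \<tau>)) integrable_on {b..a}"
    and int2: "\<And>a b. s0 \<le> b \<Longrightarrow> b \<le> a \<Longrightarrow> a \<le> t0 \<Longrightarrow> (\<lambda>\<tau>. T a \<tau> (B \<tau> (\<phi> \<tau>))) integrable_on {b..a}"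
    and int3: "\<And>a b. s0 \<le> b \<Longrightarrow> b \<le> a \<Longrightarrow> a \<le> t0 \<Longrightarrow> (\<lambda>\<tau>. L a \<tau> (g \<tau>)) integrable_on {b..a}"
  shows "\<phi> t0 = L t0 s0 (\<phi> s0) + integral {s0..t0} (\<lambda>\<tau>. L t0 \<tau> (g \<tau>))"
proof -
  have intbound: "norm (integral {b..a} h) \<le> C * (a - b)"
    if "b \<le> a" "C \<ge> 0" "h integrable_on {b..a}" "\<And>\<tau>. b \<le> \<tau> \<Longrightarrow> \<tau> \<le> a \<Longrightarrow> norm (h \<tau>) \<le> C"
    for b a C and h :: "real \<Rightarrow> 'a"
  proof -
    have "norm (integral {b..a} h) \<le> C * Henstock_Kurzweil_Integration.content {b..a}"
      by (rule has_integral_bound_real[of C "{}"]) (use that in auto)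
    then show ?thesis using that by simp
  qed
  define C1 where "C1 = M * R + M * M * M * R"
  have C1: "C1 \<ge> 0" using M R by (simp add: C1_def)
  have stepA: "norm (\<phi> \<tau> - L \<tau> b (\<phi> b)) \<le> C1 * (\<tau> - b)"
    if "s0 \<le> b" "b \<le> \<tau>" "\<tau> \<le> t0" for b \<tau>
  proof -
    have e1: "\<phi> \<tau> - L \<tau> b (\<phi> b) = integral {b..\<tau>} (\<lambda>\<sigma>. T \<tau> \<sigma> (B \<sigma> (\<phi> \<sigma>) + g \<sigma>))
          - integral {b..\<tau>} (\<lambda>\<sigma>. T \<tau> \<sigma> (B \<sigma> (L \<sigma> b (\<phi> b))))"
      using \<phi>eq[of b \<tau>] Leq[of b \<tau> "\<phi> b"] that by simp
    have n1: "norm (integral {b..\<tau>} (\<lambda>\<sigma>. T \<tau> \<sigma> (B \<sigma> (\<phi> \<sigma>) + g \<sigma>))) \<le> (M * R) * (\<tau> - b)"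
    proof (rule intbound)
      show "(\<lambda>\<sigma>. T \<tau> \<sigma> (B \<sigma> (\<phi> \<sigma>) + g \<sigma>)) integrable_on {b..\<tau>}"
        using integrable_add[OF int2[of b \<tau>] int1[of b \<tau>]] that by (simp add: blinfun.add_right)
      fix \<sigma> assume "b \<le> \<sigma>" "\<sigma> \<le> \<tau>"
      then have "norm (T \<tau> \<sigma> (B \<sigma> (\<phi> \<sigma>) + g \<sigma>)) \<le> M * norm (B \<sigma> (\<phi> \<sigma>) + g \<sigma>)"
        using TM that by auto
      also have "\<dots> \<le> M * R" using FR[of \<sigma>] M \<open>b \<le> \<sigma>\<close> \<open>\<sigma> \<le> \<tau>\<close> that by (intro mult_left_mono) auto
      finally show "norm (T \<tau> \<sigma> (B \<sigma> (\<phi> \<sigma>) + g \<sigma>)) \<le> M * R" .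
    qed (use that M R in auto)
    have n2: "norm (integral {b..\<tau>} (\<lambda>\<sigma>. T \<tau> \<sigma> (B \<sigma> (L \<sigma> b (\<phi> b))))) \<le> (M * M * M * R) * (\<tau> - b)"
    proof (rule intbound)
      show "(\<lambda>\<sigma>. T \<tau> \<sigma> (B \<sigma> (L \<sigma> b (\<phi> b)))) integrable_on {b..\<tau>}"
        using Lint that by auto
      fix \<sigma> assume s: "b \<le> \<sigma>" "\<sigma> \<le> \<tau>"
      have "norm (T \<tau> \<sigma> (B \<sigma> (L \<sigma> b (\<phi> b)))) \<le> M * norm (B \<sigma> (L \<sigma> b (\<phi> b)))"
        using TM that s by auto
      also have "\<dots> \<le> M * (M * norm (L \<sigma> b (\<phi> b)))"
        using BM[of \<sigma>] M that s by (intro mult_left_mono) auto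
      also have "\<dots> \<le> M * (M * (M * norm (\<phi> b)))"
        using LM[of b \<sigma>] M that s by (intro mult_left_mono) auto
      also have "\<dots> \<le> M * (M * (M * R))"
        using \<phi>R[of b] M that by (intro mult_left_mono) auto
      finally show "norm (T \<tau> \<sigma> (B \<sigma> (L \<sigma> b (\<phi> b)))) \<le> M * M * M * R" by (simp add: mult.assoc)
    qed (use that M R in auto)
    have "norm (\<phi> \<tau> - L \<tau> b (\<phi> b)) \<le> (M * R) * (\<tau> - b) + (M * M * M * R) * (\<tau> - b)"
      unfolding e1 using norm_triangle_ineq4 n1 n2 by (smt (verit))
    then show ?thesis by (simp add: C1_def algebra_simps)
  qed
  have stepB: "norm (L a \<tau> y - T a \<tau> y) \<le> (M * M * M * norm y) * (a - \<tau>)"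
    if "s0 \<le> \<tau>" "\<tau> \<le> a" "a \<le> t0" for a \<tau> y
  proof -
    have "L a \<tau> y - T a \<tau> y = integral {\<tau>..a} (\<lambda>\<sigma>. T a \<sigma> (B \<sigma> (L \<sigma> \<tau> y)))"
      using Leq[of \<tau> a y] that by simp
    also have "norm \<dots> \<le> (M * M * M * norm y) * (a - \<tau>)"
    proof (rule intbound)
      fix \<sigma> assume s: "\<tau> \<le> \<sigma>" "\<sigma> \<le> a"
      have "norm (T a \<sigma> (B \<sigma> (L \<sigma> \<tau> y))) \<le> M * norm (B \<sigma> (L \<sigma> \<tau> y))"
        using TM that s by auto
      also have "\<dots> \<le> M * (M * norm (L \<sigma> \<tau> y))"
        using BM[of \<sigma>] M that s by (intro mult_left_mono) auto
      also have "\<dots> \<le> M * (M * (M * norm y))"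
        using LM[of \<tau> \<sigma>] M that s by (intro mult_left_mono) auto
      finally show "norm (T a \<sigma> (B \<sigma> (L \<sigma> \<tau> y))) \<le> M * M * M * norm y" by (simp add: mult.assoc)
    qed (use that M Lint in auto)
    finally show ?thesis .
  qed
  define K0 where "K0 = M * M * C1 + M * M * M * R"
  have K0: "K0 \<ge> 0" using M R C1 by (simp add: K0_def)
  have stepC: "norm (\<phi> a - L a b (\<phi> b) - integral {b..a} (\<lambda>\<tau>. L a \<tau> (g \<tau>))) \<le> K0 * (a - b)^2"
    if ab: "s0 \<le> b" "b \<le> a" "a \<le> t0" for a b
  proof -
    have iA: "(\<lambda>\<tau>. T a \<tau> (B \<tau> (\<phi> \<tau>))) integrable_on {b..a}" using int2 ab by auto
    have iB: "(\<lambda>\<tau>. T a \<tau> (g \<tau>)) integrable_on {b..a}" using int1 ab by auto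
    have iC: "(\<lambda>\<tau>. T a \<tau> (B \<tau> (L \<tau> b (\<phi> b)))) integrable_on {b..a}" using Lint ab by auto
    have iD: "(\<lambda>\<tau>. L a \<tau> (g \<tau>)) integrable_on {b..a}" using int3 ab by auto
    have I1: "integral {b..a} (\<lambda>\<tau>. T a \<tau> (B \<tau> (\<phi> \<tau>) + g \<tau>)) =
        integral {b..a} (\<lambda>\<tau>. T a \<tau> (B \<tau> (\<phi> \<tau>))) + integral {b..a} (\<lambda>\<tau>. T a \<tau> (g \<tau>))"
      using integral_add[OF iA iB] by (simp add: blinfun.add_right)
    have I2: "integral {b..a} (\<lambda>\<tau>. T a \<tau> (B \<tau> (\<phi> \<tau> - L \<tau> b (\<phi> b)))) =
        integral {b..a} (\<lambda>\<tau>. T a \<tau> (B \<tau> (\<phi> \<tau>))) - integral {b..a} (\<lambda>\<tau>. T a \<tau> (B \<tau> (L \<tau> b (\<phi> b))))"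
      using integral_diff[OF iA iC] by (simp add: blinfun.diff_right)
    have I3: "integral {b..a} (\<lambda>\<tau>. L a \<tau> (g \<tau>) - T a \<tau> (g \<tau>)) =
        integral {b..a} (\<lambda>\<tau>. L a \<tau> (g \<tau>)) - integral {b..a} (\<lambda>\<tau>. T a \<tau> (g \<tau>))"
      using integral_diff[OF iD iB] by simp
    have eq: "\<phi> a - L a b (\<phi> b) - integral {b..a} (\<lambda>\<tau>. L a \<tau> (g \<tau>)) =
        integral {b..a} (\<lambda>\<tau>. T a \<tau> (B \<tau> (\<phi> \<tau> - L \<tau> b (\<phi> b))))
        - integral {b..a} (\<lambda>\<tau>. L a \<tau> (g \<tau>) - T a \<tau> (g \<tau>))"
      unfolding I2 I3 using \<phi>eq[of b a] Leq[of b a "\<phi> b"] ab I1 by (simp add: algebra_simps)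
    have n1: "norm (integral {b..a} (\<lambda>\<tau>. T a \<tau> (B \<tau> (\<phi> \<tau> - L \<tau> b (\<phi> b))))) \<le> (M * M * C1 * (a - b)) * (a - b)"
    proof (rule intbound)
      show "(\<lambda>\<tau>. T a \<tau> (B \<tau> (\<phi> \<tau> - L \<tau> b (\<phi> b)))) integrable_on {b..a}"
        using integrable_diff[OF iA iC] by (simp add: blinfun.diff_right)
      fix \<tau> assume s: "b \<le> \<tau>" "\<tau> \<le> a"
      have "norm (T a \<tau> (B \<tau> (\<phi> \<tau> - L \<tau> b (\<phi> b)))) \<le> M * norm (B \<tau> (\<phi> \<tau> - L \<tau> b (\<phi> b)))"
        using TM ab s by auto
      also have "\<dots> \<le> M * (M * norm (\<phi> \<tau> - L \<tau> b (\<phi> b)))"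
        using BM[of \<tau>] M ab s by (intro mult_left_mono) auto
      also have "\<dots> \<le> M * (M * (C1 * (\<tau> - b)))"
        using stepA[of b \<tau>] M ab s by (intro mult_left_mono) auto
      also have "\<dots> \<le> M * (M * (C1 * (a - b)))"
        using M C1 s by (intro mult_left_mono) auto
      finally show "norm (T a \<tau> (B \<tau> (\<phi> \<tau> - L \<tau> b (\<phi> b)))) \<le> M * M * C1 * (a - b)"
        by (simp add: mult.assoc)
    qed (use ab M C1 in auto)
    have n2: "norm (integral {b..a} (\<lambda>\<tau>. L a \<tau> (g \<tau>) - T a \<tau> (g \<tau>))) \<le> (M * M * M * R * (a - b)) * (a - b)"
    proof (rule intbound)
      show "(\<lambda>\<tau>. L a \<tau> (g \<tau>) - T a \<tau> (g \<tau>)) integrable_on {b..a}"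
        using integrable_diff[OF iD iB] by simp
      fix \<tau> assume s: "b \<le> \<tau>" "\<tau> \<le> a"
      have "norm (L a \<tau> (g \<tau>) - T a \<tau> (g \<tau>)) \<le> (M * M * M * norm (g \<tau>)) * (a - \<tau>)"
        using stepB[of \<tau> a "g \<tau>"] ab s by auto
      also have "\<dots> \<le> (M * M * M * R) * (a - b)"
        using gR[of \<tau>] ab s M R by (intro mult_mono mult_left_mono) auto
      finally show "norm (L a \<tau> (g \<tau>) - T a \<tau> (g \<tau>)) \<le> M * M * M * R * (a - b)" .
    qed (use ab M R in auto)
    have "norm (\<phi> a - L a b (\<phi> b) - integral {b..a} (\<lambda>\<tau>. L a \<tau> (g \<tau>))) \<le>
          (M * M * C1 * (a - b)) * (a - b) + (M * M * M * R * (a - b)) * (a - b)"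
      unfolding eq using norm_triangle_ineq4 n1 n2 by (smt (verit))
    then show ?thesis by (simp add: K0_def power2_eq_square algebra_simps)
  qed
  define \<Psi> where "\<Psi> x = L t0 x (\<phi> x) - integral {s0..x} (\<lambda>\<tau>. L t0 \<tau> (g \<tau>))" for x
  have stepD: "norm (\<Psi> a - \<Psi> b) \<le> (M * K0) * (a - b)^2"
    if ab: "s0 \<le> b" "b \<le> a" "a \<le> t0" for a b
  proof -
    have i0: "(\<lambda>\<tau>. L t0 \<tau> (g \<tau>)) integrable_on {s0..a}"
      using integrable_subinterval_real[OF int3[of s0 t0]] st ab by auto
    have comb: "integral {s0..b} (\<lambda>\<tau>. L t0 \<tau> (g \<tau>)) + integral {b..a} (\<lambda>\<tau>. L t0 \<tau> (g \<tau>))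
        = integral {s0..a} (\<lambda>\<tau>. L t0 \<tau> (g \<tau>))"
      by (rule Henstock_Kurzweil_Integration.integral_combine[OF ab(1,2) i0])
    have lin: "integral {b..a} (\<lambda>\<tau>. L t0 a (L a \<tau> (g \<tau>))) = L t0 a (integral {b..a} (\<lambda>\<tau>. L a \<tau> (g \<tau>)))"
      using integral_linear[OF int3[OF ab] blinfun.bounded_linear_right[of "L t0 a"]]
      by (simp add: o_def)
    have cong: "integral {b..a} (\<lambda>\<tau>. L t0 a (L a \<tau> (g \<tau>))) = integral {b..a} (\<lambda>\<tau>. L t0 \<tau> (g \<tau>))"
      by (rule integral_cong) (use Lco ab in auto)
    have "\<Psi> a - \<Psi> b = L t0 a (\<phi> a - L a b (\<phi> b) - integral {b..a} (\<lambda>\<tau>. L a \<tau> (g \<tau>)))"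
      unfolding \<Psi>_def blinfun.diff_right lin[symmetric] cong comb[symmetric]
      using Lco[of b a t0 "\<phi> b"] ab by simp
    also have "norm \<dots> \<le> M * norm (\<phi> a - L a b (\<phi> b) - integral {b..a} (\<lambda>\<tau>. L a \<tau> (g \<tau>)))"
      using LM ab by auto
    also have "\<dots> \<le> M * (K0 * (a - b)^2)"
      using stepC[OF ab] M by (intro mult_left_mono) auto
    finally show ?thesis by (simp add: mult.assoc)
  qed
  have "\<Psi> t0 = \<Psi> s0"
    by (rule quad_const[OF st _ stepD]) (use M K0 in auto)
  then show ?thesis unfolding \<Psi>_def using Lid by (simp add: algebra_simps)
qed


lemma evol_bound:
  fixes T :: "real \<Rightarrow> real \<Rightarrow> 'a::real_normed_vector \<Rightarrow>\<^sub>L 'a"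
  assumes cont: "continuous_on {(t, s, x). s \<le> t} (\<lambda>(t, s, x). blinfun_apply (T t s) x)"
  shows "\<exists>M\<ge>0. \<forall>a b x. s0 \<le> b \<longrightarrow> b \<le> a \<longrightarrow> a \<le> t0 \<longrightarrow> norm (T a b x) \<le> M * norm x"
proof (rule ccontr)
  assume "\<not> ?thesis"
  then have "\<forall>n::nat. \<exists>a b x. s0 \<le> b \<and> b \<le> a \<and> a \<le> t0 \<and> norm (T a b x) > (real n + 1)^2 * norm x"
    by (metis not_le zero_le_power2 add_nonneg_nonneg of_nat_0_le_iff zero_le_one)
  then obtain A Bn X where ABX: "\<And>n. s0 \<le> Bn n \<and> Bn n \<le> A n \<and> A n \<le> t0 \<and> norm (T (A n) (Bn n) (X n)) > (real n + 1)^2 * norm (X n)"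
    by metis
  have Xnz: "X n \<noteq> 0" for n using ABX[of n] by auto
  define Y where "Y n = (1 / (norm (X n) * (real n + 1))) *\<^sub>R X n" for n
  have normY: "norm (Y n) = 1 / (real n + 1)" for n
    using Xnz[of n] by (simp add: Y_def)
  have TY: "norm (T (A n) (Bn n) (Y n)) \<ge> 1" for n
  proof -
    have pos: "norm (X n) * (real n + 1) > 0" using Xnz[of n] by simp
    have "norm (T (A n) (Bn n) (Y n)) = norm (T (A n) (Bn n) (X n)) / (norm (X n) * (real n + 1))"
      using pos by (simp add: Y_def blinfun.scaleR_right)
    also have "\<dots> \<ge> (real n + 1)^2 * norm (X n) / (norm (X n) * (real n + 1))"
      using ABX[of n] pos by (intro divide_right_mono) auto
    finally have "norm (T (A n) (Bn n) (Y n)) \<ge> real n + 1"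
      using pos Xnz[of n] by (simp add: power2_eq_square)
    then show ?thesis by simp
  qed
  define K where "K = ({s0..t0} \<times> {s0..t0}) \<inter> {p::real\<times>real. snd p \<le> fst p}"
  have "compact K" unfolding K_def
    by (intro compact_Int_closed compact_Times compact_Icc closed_Collect_le continuous_intros)
  moreover have "\<forall>n. (A n, Bn n) \<in> K" using ABX by (auto simp: K_def intro: order_trans)
  ultimately obtain l r where l: "l \<in> K" and r: "strict_mono r" and lim: "((\<lambda>n. (A n, Bn n)) \<circ> r) \<longlonglongrightarrow> l"
    unfolding compact_def by metis
  have Y0: "Y \<longlonglongrightarrow> 0"
  proof -
    have "(\<lambda>n. inverse (real (Suc n))) \<longlonglongrightarrow> 0" by (rule LIMSEQ_inverse_real_of_nat)
    then have "(\<lambda>n. norm (Y n)) \<longlonglongrightarrow> 0" by (simp add: normY inverse_eq_divide add.commute)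
    then show ?thesis by (simp add: tendsto_norm_zero_iff)
  qed
  have limq: "(\<lambda>k. (A (r k), Bn (r k), Y (r k))) \<longlonglongrightarrow> (fst l, snd l, 0)"
  proof -
    have "(\<lambda>k. A (r k)) \<longlonglongrightarrow> fst l" using tendsto_fst[OF lim] by (simp add: o_def)
    moreover have "(\<lambda>k. Bn (r k)) \<longlonglongrightarrow> snd l" using tendsto_snd[OF lim] by (simp add: o_def)
    moreover have "(\<lambda>k. Y (r k)) \<longlonglongrightarrow> 0" using LIMSEQ_subseq_LIMSEQ[OF Y0 r] by (simp add: o_def)
    ultimately show ?thesis by (intro tendsto_Pair)
  qed
  have "((\<lambda>k. (\<lambda>(t, s, x). blinfun_apply (T t s) x) (A (r k), Bn (r k), Y (r k)))
          \<longlongrightarrow> (\<lambda>(t, s, x). blinfun_apply (T t s) x) (fst l, snd l, 0)) sequentially"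
    by (rule continuous_on_tendsto_compose[OF cont limq]) (use l ABX in \<open>auto simp: K_def\<close>)
  then have "(\<lambda>k. T (A (r k)) (Bn (r k)) (Y (r k))) \<longlonglongrightarrow> 0" by simp
  then have "(\<lambda>k. norm (T (A (r k)) (Bn (r k)) (Y (r k)))) \<longlonglongrightarrow> 0"
    by (simp add: tendsto_norm_zero_iff)
  moreover have "\<forall>\<^sub>F k in sequentially. 1 \<le> norm (T (A (r k)) (Bn (r k)) (Y (r k)))"
    using TY by simp
  ultimately have "(1::real) \<le> 0" by (rule tendsto_lowerbound) simp
  then show False by simp
qed


lemma improper_UNIV:
  fixes G :: "real \<Rightarrow> 'a::banach"
  assumes lo: "\<And>a. a \<le> t \<Longrightarrow> (G has_integral (P - r a)) {a..t}" and rlim: "(r \<longlongrightarrow> 0) at_bot"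
    and hi: "\<And>b. t \<le> b \<Longrightarrow> (G has_integral (U - q b)) {t..b}" and qlim: "(q \<longlongrightarrow> 0) at_top"
  shows "(G has_integral (P + U)) UNIV"
proof -
  have int2: "(G has_integral (P - r a + (U - q b))) {a..b}" if "a \<le> t" "t \<le> b" for a b
    by (rule has_integral_combine[OF that lo[OF that(1)] hi[OF that(2)]])
  have intab: "G integrable_on {a..b}" for a b
  proof -
    have "G integrable_on {min a t..max b t}" using int2[of "min a t" "max b t"] by auto
    then show ?thesis
      by (cases "a \<le> b") (auto intro!: integrable_subinterval_real[of G "min a t" "max b t"])
  qed
  show ?thesis
  proof (subst has_integral_alt', intro conjI allI impI)
    fix a b :: real
    show "(\<lambda>x. if x \<in> UNIV then G x else 0) integrable_on cbox a b" using intab by simp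
  next
    fix e :: real assume e: "e > 0"
    have "\<forall>\<^sub>F a in at_bot. norm (r a) < e/2"
      using rlim e unfolding tendsto_iff dist_norm
      by (simp only: diff_zero)
    then obtain A where A: "\<And>a. a \<le> A \<Longrightarrow> norm (r a) < e/2" by (auto simp: eventually_at_bot_linorder)
    have "\<forall>\<^sub>F b in at_top. norm (q b) < e/2"
      using qlim e unfolding tendsto_iff dist_norm
      by (simp only: diff_zero)
    then obtain Bq where Bq: "\<And>b. b \<ge> Bq \<Longrightarrow> norm (q b) < e/2" by (auto simp: eventually_at_top_linorder)
    define B where "B = max (max \<bar>A\<bar> \<bar>Bq\<bar>) \<bar>t\<bar> + 1"
    have Bpos: "B > 0" by (simp add: B_def)
    show "\<exists>B>0. \<forall>a b. ball 0 B \<subseteq> cbox a b \<longrightarrow>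
             norm (integral (cbox a b) (\<lambda>x. if x \<in> UNIV then G x else 0) - (P + U)) < e"
    proof (intro exI[of _ B] conjI allI impI Bpos)
      fix a b :: real assume sub: "ball 0 B \<subseteq> cbox a b"
      have "cball 0 B \<subseteq> cbox a b"
        using closure_minimal[OF sub closed_cbox] closure_ball[OF Bpos, of 0] by metis
      then have ab: "a \<le> -B" "B \<le> b"
        using Bpos by (auto simp: subset_iff dist_real_def)
      have at: "a \<le> t" "t \<le> b" "a \<le> A" "Bq \<le> b" using ab unfolding B_def by (auto simp: abs_if split: if_splits)
      have "integral (cbox a b) (\<lambda>x. if x \<in> UNIV then G x else 0) = P - r a + (U - q b)"
        using int2[OF at(1,2)] by (simp add: integral_unique)
      then have "integral (cbox a b) (\<lambda>x. if x \<in> UNIV then G x else 0) - (P + U) = - (r a + q b)"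
        by (simp add: algebra_simps)
      then have "norm (integral (cbox a b) (\<lambda>x. if x \<in> UNIV then G x else 0) - (P + U)) = norm (- (r a + q b))"
        by simp
      also have "\<dots> \<le> norm (r a) + norm (q b)" unfolding norm_minus_cancel by (rule norm_triangle_ineq)
      also have "\<dots> < e" using A[OF at(3)] Bq[OF at(4)] by simp
      finally show "norm (integral (cbox a b) (\<lambda>x. if x \<in> UNIV then G x else 0) - (P + U)) < e" .
    qed
  qed
qed


lemma evol_cont_comp:
  assumes "continuous_on {(t, s, x). s \<le> t} (\<lambda>(t, s, x). E t s x)" "continuous_on {b..a} y"
  shows "continuous_on {b..a} (\<lambda>\<tau>. E a \<tau> (y \<tau>))"
proof -
  have "continuous_on {b..a} (\<lambda>\<tau>. (\<lambda>(t, s, x). E t s x) (a, \<tau>, y \<tau>))"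
    by (rule continuous_on_compose2[OF assms(1)]) (use assms(2) in \<open>auto intro!: continuous_intros\<close>)
  then show ?thesis by simp
qed

lemma gs_cont:
  assumes S: "evolution_process S" and \<phi>: "global_solution S \<phi>"
  shows "continuous_on UNIV \<phi>"
proof -
  have Sc: "continuous_on {(t, s, x). s \<le> t} (\<lambda>(t, s, x). S t s x)"
    using S by (simp add: evolution_process_def)
  have "isCont \<phi> t" for t
  proof -
    have "continuous_on {t-1..} (\<lambda>\<tau>. (\<lambda>(t, s, x). S t s x) (\<tau>, t-1, \<phi> (t-1)))"
      by (rule continuous_on_compose2[OF Sc]) (auto intro!: continuous_intros)
    then have "continuous_on {t-1..} (\<lambda>\<tau>. S \<tau> (t-1) (\<phi> (t-1)))" by simp
    moreover have "\<And>\<tau>. \<tau> \<in> {t-1..} \<Longrightarrow> S \<tau> (t-1) (\<phi> (t-1)) = \<phi> \<tau>"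
      using \<phi> by (simp add: global_solution_def)
    ultimately have "continuous_on {t-1..} \<phi>" using continuous_on_cong by metis
    then show ?thesis by (rule continuous_on_interior) simp
  qed
  then show ?thesis by (simp add: continuous_on_eq_continuous_at)
qed

lemma bounded_on_compact_norm:
  fixes h :: "real \<Rightarrow> 'b::real_normed_vector"
  assumes "continuous_on {s..t} h"
  shows "\<exists>R\<ge>0. \<forall>\<tau>. s \<le> \<tau> \<longrightarrow> \<tau> \<le> t \<longrightarrow> norm (h \<tau>) \<le> R"
proof -
  have "bounded (h ` {s..t})"
    by (intro compact_imp_bounded compact_continuous_image assms compact_Icc)
  then obtain R where "\<forall>y\<in>h ` {s..t}. norm y \<le> R" by (auto simp: bounded_iff)
  then show ?thesis by (intro exI[of _ "max R 0"]) force
qed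

locale mild_setting =
  fixes T :: "real \<Rightarrow> real \<Rightarrow> 'a::banach \<Rightarrow>\<^sub>L 'a"
    and f :: "real \<Rightarrow> 'a \<Rightarrow> 'a"
    and Df :: "real \<Rightarrow> 'a \<Rightarrow> 'a \<Rightarrow>\<^sub>L 'a"
    and S :: "real \<Rightarrow> real \<Rightarrow> 'a \<Rightarrow> 'a"
    and \<xi> :: "real \<Rightarrow> 'a"
    and L :: "real \<Rightarrow> real \<Rightarrow> 'a \<Rightarrow>\<^sub>L 'a"
  assumes T_proc: "linear_evolution_process T"
    and f_cont: "continuous_on UNIV (\<lambda>(t, x). f t x)"
    and Df_cont: "continuous_on UNIV (\<lambda>(t, x). Df t x)"
    and S_proc: "evolution_process S"
    and S_mild: "\<And>t s y. s \<le> t \<Longrightarrow>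
                   S t s y = T t s y + integral {s..t} (\<lambda>\<tau>. T t \<tau> (f \<tau> (S \<tau> s y)))"
    and \<xi>_sol: "global_solution S \<xi>"
    and L_proc: "linear_evolution_process L"
    and L_int: "\<And>t s x. s \<le> t \<Longrightarrow> (\<lambda>\<tau>. T t \<tau> (Df \<tau> (\<xi> \<tau>) (L \<tau> s x))) integrable_on {s..t}"
    and L_eq: "\<And>t s x. s \<le> t \<Longrightarrow>
                 L t s x = T t s x + integral {s..t} (\<lambda>\<tau>. T t \<tau> (Df \<tau> (\<xi> \<tau>) (L \<tau> s x)))"
begin

definition gf :: "(real \<Rightarrow> 'a) \<Rightarrow> real \<Rightarrow> 'a" where
  "gf \<phi> \<tau> = f \<tau> (\<phi> \<tau>) - Df \<tau> (\<xi> \<tau>) (\<phi> \<tau>)"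

lemma Tc: "continuous_on {(t, s, x). s \<le> t} (\<lambda>(t, s, x). blinfun_apply (T t s) x)"
  using T_proc by (simp add: linear_evolution_process_def evolution_process_def)
lemma Lc: "continuous_on {(t, s, x). s \<le> t} (\<lambda>(t, s, x). blinfun_apply (L t s) x)"
  using L_proc by (simp add: linear_evolution_process_def evolution_process_def)
lemma L_id: "L t t x = x"
  using L_proc by (simp add: linear_evolution_process_def evolution_process_def)
lemma L_co: "s \<le> \<tau> \<Longrightarrow> \<tau> \<le> t \<Longrightarrow> L t \<tau> (L \<tau> s x) = L t s x"
  using L_proc by (simp add: linear_evolution_process_def evolution_process_def)

lemma \<xi>_cont: "continuous_on UNIV \<xi>" by (rule gs_cont[OF S_proc \<xi>_sol])

lemma B_cont: "continuous_on A (\<lambda>\<tau>. Df \<tau> (\<xi> \<tau>))"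
proof -
  have "continuous_on UNIV (\<lambda>\<tau>. (\<lambda>(t, x). Df t x) (\<tau>, \<xi> \<tau>))"
    by (rule continuous_on_compose2[OF Df_cont]) (auto intro!: continuous_intros \<xi>_cont)
  then show ?thesis by (auto intro: continuous_on_subset)
qed

lemma f_comp_cont: "continuous_on A y \<Longrightarrow> continuous_on A (\<lambda>\<tau>. f \<tau> (y \<tau>))"
proof -
  assume y: "continuous_on A y"
  have "continuous_on A (\<lambda>\<tau>. (\<lambda>(t, x). f t x) (\<tau>, y \<tau>))"
    by (rule continuous_on_compose2[OF f_cont]) (auto intro!: continuous_intros y)
  then show ?thesis by simp
qed

lemma gf_cont: "continuous_on UNIV \<phi> \<Longrightarrow> continuous_on A (gf \<phi>)"
  unfolding gf_def
  by (intro continuous_intros f_comp_cont B_cont) (auto intro: continuous_on_subset)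

lemma voc:
  assumes \<phi>: "global_solution S \<phi>" and st: "s \<le> t"
  shows "(\<lambda>\<tau>. L t \<tau> (gf \<phi> \<tau>)) integrable_on {s..t}
       \<and> \<phi> t = L t s (\<phi> s) + integral {s..t} (\<lambda>\<tau>. L t \<tau> (gf \<phi> \<tau>))"
proof -
  have \<phi>c: "continuous_on UNIV \<phi>" by (rule gs_cont[OF S_proc \<phi>])
  have \<phi>c': "continuous_on A \<phi>" for A using \<phi>c by (rule continuous_on_subset) simp
  have gc: "continuous_on A (gf \<phi>)" for A by (rule gf_cont[OF \<phi>c])
  have Tcc: "continuous_on {b..a} y \<Longrightarrow> continuous_on {b..a} (\<lambda>\<tau>. T a \<tau> (y \<tau>))" for a b y
    by (rule evol_cont_comp[OF Tc])
  have Lcc: "continuous_on {b..a} y \<Longrightarrow> continuous_on {b..a} (\<lambda>\<tau>. L a \<tau> (y \<tau>))" for a b y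
    by (rule evol_cont_comp[OF Lc])
  obtain M1 where M1: "M1 \<ge> 0" "\<And>a b x. s \<le> b \<Longrightarrow> b \<le> a \<Longrightarrow> a \<le> t \<Longrightarrow> norm (T a b x) \<le> M1 * norm x"
    using evol_bound[OF Tc, of s t] by blast
  obtain M2 where M2: "M2 \<ge> 0" "\<And>a b x. s \<le> b \<Longrightarrow> b \<le> a \<Longrightarrow> a \<le> t \<Longrightarrow> norm (L a b x) \<le> M2 * norm x"
    using evol_bound[OF Lc, of s t] by blast
  obtain M3 where M3: "M3 \<ge> 0" "\<And>\<tau>. s \<le> \<tau> \<Longrightarrow> \<tau> \<le> t \<Longrightarrow> norm (Df \<tau> (\<xi> \<tau>)) \<le> M3"
    using bounded_on_compact_norm[OF B_cont, of s t] by blast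
  obtain R1 where R1: "R1 \<ge> 0" "\<And>\<tau>. s \<le> \<tau> \<Longrightarrow> \<tau> \<le> t \<Longrightarrow> norm (\<phi> \<tau>) \<le> R1"
    using bounded_on_compact_norm[OF \<phi>c', of s t] by blast
  obtain R2 where R2: "R2 \<ge> 0" "\<And>\<tau>. s \<le> \<tau> \<Longrightarrow> \<tau> \<le> t \<Longrightarrow> norm (gf \<phi> \<tau>) \<le> R2"
    using bounded_on_compact_norm[OF gc, of s t] by blast
  obtain R3 where R3: "R3 \<ge> 0" "\<And>\<tau>. s \<le> \<tau> \<Longrightarrow> \<tau> \<le> t \<Longrightarrow> norm (f \<tau> (\<phi> \<tau>)) \<le> R3"
    using bounded_on_compact_norm[OF f_comp_cont[OF \<phi>c'], of s t] by blast
  define M where "M = max M1 (max M2 M3)"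
  define R where "R = max R1 (max R2 R3)"
  have fsplit: "Df \<tau> (\<xi> \<tau>) (\<phi> \<tau>) + gf \<phi> \<tau> = f \<tau> (\<phi> \<tau>)" for \<tau> by (simp add: gf_def)
  have main: "\<phi> t = L t s (\<phi> s) + integral {s..t} (\<lambda>\<tau>. L t \<tau> (gf \<phi> \<tau>))"
  proof (rule voc_abstract[where T = T and B = "\<lambda>\<tau>. Df \<tau> (\<xi> \<tau>)" and M = M and R = R])
    show "s \<le> t" by fact
    show "0 \<le> M" using M1 by (simp add: M_def)
    show "0 \<le> R" using R1 by (simp add: R_def)
    fix a b x assume ab: "s \<le> b" "b \<le> a" "a \<le> t"
    have "norm (T a b x) \<le> M1 * norm x" using M1 ab by auto
    also have "\<dots> \<le> M * norm x" by (intro mult_right_mono) (auto simp: M_def)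
    finally show "norm (T a b x) \<le> M * norm x" .
    have "norm (L a b x) \<le> M2 * norm x" using M2 ab by auto
    also have "\<dots> \<le> M * norm x" by (intro mult_right_mono) (auto simp: M_def)
    finally show "norm (L a b x) \<le> M * norm x" .
  next
    fix \<tau> y assume s: "s \<le> \<tau>" "\<tau> \<le> t"
    have "norm (Df \<tau> (\<xi> \<tau>) y) \<le> norm (Df \<tau> (\<xi> \<tau>)) * norm y" by (rule norm_blinfun)
    also have "\<dots> \<le> M * norm y" using M3(2)[OF s] by (intro mult_right_mono) (auto simp: M_def)
    finally show "norm (Df \<tau> (\<xi> \<tau>) y) \<le> M * norm y" .
  next
    fix \<tau> assume s: "s \<le> \<tau>" "\<tau> \<le> t"
    show "norm (\<phi> \<tau>) \<le> R" using R1(2)[OF s] by (simp add: R_def)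
    show "norm (gf \<phi> \<tau>) \<le> R" using R2(2)[OF s] by (simp add: R_def)
    show "norm (Df \<tau> (\<xi> \<tau>) (\<phi> \<tau>) + gf \<phi> \<tau>) \<le> R" using R3(2)[OF s] by (simp add: R_def fsplit)
  next
    fix a b c x assume "s \<le> c" "c \<le> b" "b \<le> a" "a \<le> t"
    then show "L a b (L b c x) = L a c x" by (simp add: L_co)
  next
    fix a x show "L a a x = x" by (rule L_id)
  next
    fix a b y assume ab: "s \<le> b" "b \<le> a" "a \<le> t"
    show "(\<lambda>\<tau>. T a \<tau> (Df \<tau> (\<xi> \<tau>) (L \<tau> b y))) integrable_on {b..a}" using L_int ab by auto
    show "L a b y = T a b y + integral {b..a} (\<lambda>\<tau>. T a \<tau> (Df \<tau> (\<xi> \<tau>) (L \<tau> b y)))" using L_eq ab by auto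
  next
    fix a b assume ab: "s \<le> b" "b \<le> a" "a \<le> t"
    have "\<phi> a = S a b (\<phi> b)" using \<phi> ab by (simp add: global_solution_def)
    also have "\<dots> = T a b (\<phi> b) + integral {b..a} (\<lambda>\<tau>. T a \<tau> (f \<tau> (S \<tau> b (\<phi> b))))"
      using S_mild ab by auto
    also have "integral {b..a} (\<lambda>\<tau>. T a \<tau> (f \<tau> (S \<tau> b (\<phi> b)))) =
               integral {b..a} (\<lambda>\<tau>. T a \<tau> (Df \<tau> (\<xi> \<tau>) (\<phi> \<tau>) + gf \<phi> \<tau>))"
      by (rule integral_cong) (use \<phi> in \<open>auto simp: global_solution_def fsplit\<close>)
    finally show "\<phi> a = T a b (\<phi> b) + integral {b..a} (\<lambda>\<tau>. T a \<tau> (Df \<tau> (\<xi> \<tau>) (\<phi> \<tau>) + gf \<phi> \<tau>))" .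
    show "(\<lambda>\<tau>. T a \<tau> (gf \<phi> \<tau>)) integrable_on {b..a}"
      by (intro integrable_continuous_real Tcc gc)
    show "(\<lambda>\<tau>. T a \<tau> (Df \<tau> (\<xi> \<tau>) (\<phi> \<tau>))) integrable_on {b..a}"
      by (intro integrable_continuous_real Tcc continuous_intros B_cont \<phi>c')
    show "(\<lambda>\<tau>. L a \<tau> (gf \<phi> \<tau>)) integrable_on {b..a}"
      by (intro integrable_continuous_real Lcc gc)
  qed
  have "(\<lambda>\<tau>. L t \<tau> (gf \<phi> \<tau>)) integrable_on {s..t}"
    by (intro integrable_continuous_real Lcc gc)
  with main show ?thesis by blast
qed

end


locale dich_setting = mild_setting T f Df S \<xi> L
  for T :: "real \<Rightarrow> real \<Rightarrow> 'a::banach \<Rightarrow>\<^sub>L 'a"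
    and f :: "real \<Rightarrow> 'a \<Rightarrow> 'a"
    and Df :: "real \<Rightarrow> 'a \<Rightarrow> 'a \<Rightarrow>\<^sub>L 'a"
    and S :: "real \<Rightarrow> real \<Rightarrow> 'a \<Rightarrow> 'a"
    and \<xi> :: "real \<Rightarrow> 'a"
    and L :: "real \<Rightarrow> real \<Rightarrow> 'a \<Rightarrow>\<^sub>L 'a" +
  fixes Q :: "real \<Rightarrow> 'a \<Rightarrow>\<^sub>L 'a" and D \<nu> \<alpha> :: real
  assumes dich: "nonuniform_exp_dichotomy L Q D \<nu> \<alpha>"
    and \<alpha>\<nu>: "\<alpha> > \<nu>"
begin

lemma D1: "D \<ge> 1" and \<nu>0: "\<nu> \<ge> 0" and \<alpha>0: "\<alpha> > 0"
  using dich by (auto simp: nonuniform_exp_dichotomy_def)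

lemma Q_idem: "Q t (Q t x) = Q t x"
proof -
  have "Q t o\<^sub>L Q t = Q t" using dich by (simp add: nonuniform_exp_dichotomy_def)
  then show ?thesis by (metis blinfun_apply_blinfun_compose)
qed

lemma Q_comm: "s \<le> t \<Longrightarrow> Q t (L t s x) = L t s (Q s x)"
proof -
  assume "s \<le> t"
  then have "Q t o\<^sub>L L t s = L t s o\<^sub>L Q s" using dich by (simp add: nonuniform_exp_dichotomy_def)
  then show ?thesis by (metis blinfun_apply_blinfun_compose)
qed

lemma L_bij: "s \<le> t \<Longrightarrow> bij_betw (blinfun_apply (L t s)) (range (blinfun_apply (Q s))) (range (blinfun_apply (Q t)))"
  using dich by (simp add: nonuniform_exp_dichotomy_def)

lemma stable_bound: "s \<le> t \<Longrightarrow> norm (L t s (x - Q s x)) \<le> D * exp (\<nu> * \<bar>s\<bar>) * exp (- \<alpha> * (t - s)) * norm x"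
  using dich by (simp add: nonuniform_exp_dichotomy_def)

lemma unstable_bound: "t < s \<Longrightarrow> norm (back_op L Q t s (Q s x)) \<le> D * exp (\<nu> * \<bar>s\<bar>) * exp (\<alpha> * (t - s)) * norm x"
  using dich by (simp add: nonuniform_exp_dichotomy_def)

lemma back_L: "t \<le> s \<Longrightarrow> z \<in> range (blinfun_apply (Q t)) \<Longrightarrow> back_op L Q t s (L s t z) = z"
  unfolding back_op_def using L_bij[of t s] by (simp add: bij_betw_def the_inv_into_f_f)

lemma L_back: "t \<le> s \<Longrightarrow> y \<in> range (blinfun_apply (Q s)) \<Longrightarrow> L s t (back_op L Q t s y) = y"
  unfolding back_op_def using L_bij[of t s] by (simp add: bij_betw_def f_the_inv_into_f)

lemma back_range: "t \<le> s \<Longrightarrow> y \<in> range (blinfun_apply (Q s)) \<Longrightarrow> back_op L Q t s y \<in> range (blinfun_apply (Q t))"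
  unfolding back_op_def using L_bij[of t s] by (auto simp: bij_betw_def intro!: the_inv_into_into)

lemma range_Q_add: "u \<in> range (blinfun_apply (Q t)) \<Longrightarrow> v \<in> range (blinfun_apply (Q t)) \<Longrightarrow> u + v \<in> range (blinfun_apply (Q t))"
  by (auto simp: blinfun.add_right[symmetric])
lemma range_Q_scale: "u \<in> range (blinfun_apply (Q t)) \<Longrightarrow> c *\<^sub>R u \<in> range (blinfun_apply (Q t))"
  by (auto simp: blinfun.scaleR_right[symmetric])

lemma back_Q_linear: assumes ts: "t \<le> s" shows "linear (\<lambda>x. back_op L Q t s (Q s x))"
proof
  fix x y
  let ?u = "back_op L Q t s (Q s x)" and ?v = "back_op L Q t s (Q s y)"
  have u: "?u \<in> range (blinfun_apply (Q t))" "L s t ?u = Q s x" using back_range L_back ts by auto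
  have v: "?v \<in> range (blinfun_apply (Q t))" "L s t ?v = Q s y" using back_range L_back ts by auto
  have "Q s (x + y) = L s t (?u + ?v)" using u v by (simp add: blinfun.add_right)
  then show "back_op L Q t s (Q s (x + y)) = ?u + ?v"
    using back_L[OF ts range_Q_add[OF u(1) v(1)]] by simp
next
  fix c x
  let ?u = "back_op L Q t s (Q s x)"
  have u: "?u \<in> range (blinfun_apply (Q t))" "L s t ?u = Q s x" using back_range L_back ts by auto
  have "Q s (c *\<^sub>R x) = L s t (c *\<^sub>R ?u)" using u by (simp add: blinfun.scaleR_right)
  then show "back_op L Q t s (Q s (c *\<^sub>R x)) = c *\<^sub>R ?u"
    using back_L[OF ts range_Q_scale[OF u(1)]] by simp
qed

lemma back_Q_bounded_linear: assumes ts: "t < s" shows "bounded_linear (\<lambda>x. back_op L Q t s (Q s x))"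
proof -
  interpret linear "\<lambda>x. back_op L Q t s (Q s x)" using back_Q_linear ts by simp
  show ?thesis
    by unfold_locales (use unstable_bound[OF ts] in \<open>auto intro!: exI[of _ "D * exp (\<nu> * \<bar>s\<bar>) * exp (\<alpha> * (t - s))"] simp: mult.commute[of "norm _"]\<close>)
qed

lemma back_Q_diff: "t \<le> s \<Longrightarrow> back_op L Q t s (Q s (x - y)) = back_op L Q t s (Q s x) - back_op L Q t s (Q s y)"
  using linear_diff[OF back_Q_linear] by blast

lemma back_comp: assumes "t \<le> \<tau>" "\<tau> \<le> s"
  shows "back_op L Q t s (L s \<tau> (Q \<tau> y)) = back_op L Q t \<tau> (Q \<tau> y)"
proof -
  let ?z = "back_op L Q t \<tau> (Q \<tau> y)"
  have z: "?z \<in> range (blinfun_apply (Q t))" "L \<tau> t ?z = Q \<tau> y"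
    using back_range L_back assms by auto
  have "L s t ?z = L s \<tau> (Q \<tau> y)" using L_co[of t \<tau> s ?z] z assms by simp
  then show ?thesis using back_L[of t s ?z] z assms by simp
qed

definition VOC :: "(real \<Rightarrow> 'a) \<Rightarrow> (real \<Rightarrow> 'a) \<Rightarrow> bool" where
  "VOC u k \<longleftrightarrow> (\<forall>s t. s \<le> t \<longrightarrow> (\<lambda>\<tau>. L t \<tau> (k \<tau>)) integrable_on {s..t}
        \<and> u t = L t s (u s) + integral {s..t} (\<lambda>\<tau>. L t \<tau> (k \<tau>)))"

lemma VOC_sol: "global_solution S \<phi> \<Longrightarrow> VOC \<phi> (gf \<phi>)"
  unfolding VOC_def using voc by blast

lemma VOC_diff: assumes "VOC u1 k1" "VOC u2 k2" shows "VOC (\<lambda>\<tau>. u1 \<tau> - u2 \<tau>) (\<lambda>\<tau>. k1 \<tau> - k2 \<tau>)"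
  unfolding VOC_def
proof (intro allI impI conjI)
  fix s t :: real assume st: "s \<le> t"
  have i1: "(\<lambda>\<tau>. L t \<tau> (k1 \<tau>)) integrable_on {s..t}" and e1: "u1 t = L t s (u1 s) + integral {s..t} (\<lambda>\<tau>. L t \<tau> (k1 \<tau>))"
    using assms(1) st unfolding VOC_def by auto
  have i2: "(\<lambda>\<tau>. L t \<tau> (k2 \<tau>)) integrable_on {s..t}" and e2: "u2 t = L t s (u2 s) + integral {s..t} (\<lambda>\<tau>. L t \<tau> (k2 \<tau>))"
    using assms(2) st unfolding VOC_def by auto
  show "(\<lambda>\<tau>. L t \<tau> (k1 \<tau> - k2 \<tau>)) integrable_on {s..t}"
    using integrable_diff[OF i1 i2] by (simp add: blinfun.diff_right)
  have "integral {s..t} (\<lambda>\<tau>. L t \<tau> (k1 \<tau> - k2 \<tau>)) = integral {s..t} (\<lambda>\<tau>. L t \<tau> (k1 \<tau>)) - integral {s..t} (\<lambda>\<tau>. L t \<tau> (k2 \<tau>))"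
    using integral_diff[OF i1 i2] by (simp add: blinfun.diff_right)
  then show "u1 t - u2 t = L t s (u1 s - u2 s) + integral {s..t} (\<lambda>\<tau>. L t \<tau> (k1 \<tau> - k2 \<tau>))"
    using e1 e2 by (simp add: blinfun.diff_right algebra_simps)
qed

lemma VOC_stable:
  assumes V: "VOC u k" and at: "a \<le> t"
  shows "((\<lambda>\<tau>. L t \<tau> (k \<tau> - Q \<tau> (k \<tau>))) has_integral (u t - Q t (u t) - L t a (u a - Q a (u a)))) {a..t}"
proof -
  define I where "I = integral {a..t} (\<lambda>\<tau>. L t \<tau> (k \<tau>))"
  have hi: "((\<lambda>\<tau>. L t \<tau> (k \<tau>)) has_integral I) {a..t}" and e: "u t = L t a (u a) + I"
    using V at unfolding VOC_def I_def by auto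
  have "((\<lambda>\<tau>. Q t (L t \<tau> (k \<tau>))) has_integral Q t I) {a..t}"
    using has_integral_linear[OF hi blinfun.bounded_linear_right[of "Q t"]] by (simp add: o_def)
  then have hQ: "((\<lambda>\<tau>. L t \<tau> (Q \<tau> (k \<tau>))) has_integral Q t I) {a..t}"
    by (rule has_integral_spike_finite[of "{}", rotated 2]) (auto simp: Q_comm)
  have "((\<lambda>\<tau>. L t \<tau> (k \<tau>) - L t \<tau> (Q \<tau> (k \<tau>))) has_integral I - Q t I) {a..t}"
    by (rule has_integral_diff[OF hi hQ])
  moreover have "I - Q t I = u t - Q t (u t) - L t a (u a - Q a (u a))"
    using e Q_comm[OF at] by (simp add: blinfun.diff_right blinfun.add_right algebra_simps)
  ultimately show ?thesis by (simp add: blinfun.diff_right)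
qed

lemma VOC_unstable:
  assumes V: "VOC u k" and tb: "t < b"
  shows "((\<lambda>\<tau>. back_op L Q t \<tau> (Q \<tau> (k \<tau>))) has_integral (back_op L Q t b (Q b (u b)) - Q t (u t))) {t..b}"
proof -
  define I where "I = integral {t..b} (\<lambda>\<tau>. L b \<tau> (k \<tau>))"
  have hi: "((\<lambda>\<tau>. L b \<tau> (k \<tau>)) has_integral I) {t..b}" and e: "u b = L b t (u t) + I"
    using V tb unfolding VOC_def I_def by auto
  let ?V = "\<lambda>x. back_op L Q t b (Q b x)"
  have "((\<lambda>\<tau>. ?V (L b \<tau> (k \<tau>))) has_integral ?V I) {t..b}"
    using has_integral_linear[OF hi back_Q_bounded_linear[OF tb]] by (simp add: o_def)
  then have h2: "((\<lambda>\<tau>. back_op L Q t \<tau> (Q \<tau> (k \<tau>))) has_integral ?V I) {t..b}"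
    by (rule has_integral_spike_finite[of "{}", rotated 2]) (auto simp: Q_comm back_comp)
  have "?V I = ?V (u b) - ?V (L b t (u t))"
    using e back_Q_diff[of t b "u b" "L b t (u t)"] tb by simp
  also have "?V (L b t (u t)) = Q t (u t)"
    using Q_comm[of t b "u t"] back_L[of t b "Q t (u t)"] tb by auto
  finally show ?thesis using h2 by simp
qed

end


context dich_setting begin

lemma stable_lim: "((\<lambda>a. D * exp (\<nu> * \<bar>a\<bar>) * exp (- \<alpha> * (t - a)) * \<Phi>) \<longlongrightarrow> 0) at_bot"
proof -
  have ev: "\<forall>\<^sub>F a in at_bot. D * \<Phi> * exp ((\<alpha> - \<nu>) * a - \<alpha> * t) = D * exp (\<nu> * \<bar>a\<bar>) * exp (- \<alpha> * (t - a)) * \<Phi>"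
  proof -
    have "D * \<Phi> * exp ((\<alpha> - \<nu>) * a - \<alpha> * t) = D * exp (\<nu> * \<bar>a\<bar>) * exp (- \<alpha> * (t - a)) * \<Phi>" if "a \<le> 0" for a
    proof -
      have "exp ((\<alpha> - \<nu>) * a - \<alpha> * t) = exp (\<nu> * \<bar>a\<bar>) * exp (- \<alpha> * (t - a))"
        using that by (simp add: exp_add[symmetric] algebra_simps)
      then show ?thesis by simp
    qed
    then show ?thesis by (auto simp: eventually_at_bot_linorder intro!: exI[of _ 0])
  qed
  have "((\<lambda>a. D * \<Phi> * exp ((\<alpha> - \<nu>) * a - \<alpha> * t)) \<longlongrightarrow> D * \<Phi> * 0) at_bot"
  proof (rule tendsto_mult_left)
    show "((\<lambda>a. exp ((\<alpha> - \<nu>) * a - \<alpha> * t)) \<longlongrightarrow> 0) at_bot" using \<alpha>\<nu> by real_asymp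
  qed
  then show ?thesis using tendsto_cong[OF ev] by simp
qed

lemma unstable_lim: "((\<lambda>b. D * exp (\<nu> * \<bar>b\<bar>) * exp (\<alpha> * (t - b)) * \<Phi>) \<longlongrightarrow> 0) at_top"
proof -
  have ev: "\<forall>\<^sub>F b in at_top. D * \<Phi> * exp ((\<nu> - \<alpha>) * b + \<alpha> * t) = D * exp (\<nu> * \<bar>b\<bar>) * exp (\<alpha> * (t - b)) * \<Phi>"
  proof -
    have "D * \<Phi> * exp ((\<nu> - \<alpha>) * b + \<alpha> * t) = D * exp (\<nu> * \<bar>b\<bar>) * exp (\<alpha> * (t - b)) * \<Phi>" if "b \<ge> 0" for b
    proof -
      have "exp ((\<nu> - \<alpha>) * b + \<alpha> * t) = exp (\<nu> * \<bar>b\<bar>) * exp (\<alpha> * (t - b))"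
        using that by (simp add: exp_add[symmetric] algebra_simps)
      then show ?thesis by simp
    qed
    then show ?thesis by (auto simp: eventually_at_top_linorder intro!: exI[of _ 0])
  qed
  have "((\<lambda>b. D * \<Phi> * exp ((\<nu> - \<alpha>) * b + \<alpha> * t)) \<longlongrightarrow> D * \<Phi> * 0) at_top"
  proof (rule tendsto_mult_left)
    show "((\<lambda>b. exp ((\<nu> - \<alpha>) * b + \<alpha> * t)) \<longlongrightarrow> 0) at_top" using \<alpha>\<nu> by real_asymp
  qed
  then show ?thesis using tendsto_cong[OF ev] by simp
qed

lemma r_lim:
  assumes bd: "\<And>\<tau>. norm (u \<tau>) \<le> \<Phi>"
  shows "((\<lambda>a. L t a (u a - Q a (u a))) \<longlongrightarrow> 0) at_bot"
proof (rule Lim_null_comparison[OF _ stable_lim[of t \<Phi>]])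
  have "norm (L t a (u a - Q a (u a))) \<le> D * exp (\<nu> * \<bar>a\<bar>) * exp (- \<alpha> * (t - a)) * \<Phi>" if "a \<le> t" for a
  proof -
    have "norm (L t a (u a - Q a (u a))) \<le> D * exp (\<nu> * \<bar>a\<bar>) * exp (- \<alpha> * (t - a)) * norm (u a)"
      by (rule stable_bound[OF that])
    also have "\<dots> \<le> D * exp (\<nu> * \<bar>a\<bar>) * exp (- \<alpha> * (t - a)) * \<Phi>"
      using bd[of a] D1 by (intro mult_left_mono) auto
    finally show ?thesis .
  qed
  then show "\<forall>\<^sub>F a in at_bot. norm (L t a (u a - Q a (u a))) \<le> D * exp (\<nu> * \<bar>a\<bar>) * exp (- \<alpha> * (t - a)) * \<Phi>"
    by (auto simp: eventually_at_bot_linorder intro!: exI[of _ t])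
qed

lemma q_lim:
  assumes bd: "\<And>\<tau>. norm (u \<tau>) \<le> \<Phi>"
  shows "((\<lambda>b. back_op L Q t b (Q b (u b))) \<longlongrightarrow> 0) at_top"
proof (rule Lim_null_comparison[OF _ unstable_lim[of t \<Phi>]])
  have "norm (back_op L Q t b (Q b (u b))) \<le> D * exp (\<nu> * \<bar>b\<bar>) * exp (\<alpha> * (t - b)) * \<Phi>" if "t < b" for b
  proof -
    have "norm (back_op L Q t b (Q b (u b))) \<le> D * exp (\<nu> * \<bar>b\<bar>) * exp (\<alpha> * (t - b)) * norm (u b)"
      by (rule unstable_bound[OF that])
    also have "\<dots> \<le> D * exp (\<nu> * \<bar>b\<bar>) * exp (\<alpha> * (t - b)) * \<Phi>"
      using bd[of b] D1 by (intro mult_left_mono) auto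
    finally show ?thesis .
  qed
  then show "\<forall>\<^sub>F b in at_top. norm (back_op L Q t b (Q b (u b))) \<le> D * exp (\<nu> * \<bar>b\<bar>) * exp (\<alpha> * (t - b)) * \<Phi>"
    by (auto simp: eventually_at_top_linorder intro!: exI[of _ "t + 1"])
qed

lemma back_same: "back_op L Q t t (Q t x) = Q t x"
  using back_L[of t t "Q t x"] by (simp add: L_id)

lemma partA:
  assumes V: "VOC u k" and bd: "\<And>\<tau>. norm (u \<tau>) \<le> \<Phi>"
  shows "((\<lambda>\<tau>. green L Q t \<tau> (k \<tau>)) has_integral u t) UNIV"
proof -
  have "((\<lambda>\<tau>. green L Q t \<tau> (k \<tau>)) has_integral ((u t - Q t (u t)) + Q t (u t))) UNIV"
  proof (rule improper_UNIV[where r = "\<lambda>a. L t a (u a - Q a (u a))" and q = "\<lambda>b. back_op L Q t b (Q b (u b))"])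
    fix a assume at: "a \<le> t"
    show "((\<lambda>\<tau>. green L Q t \<tau> (k \<tau>)) has_integral (u t - Q t (u t) - L t a (u a - Q a (u a)))) {a..t}"
      by (rule has_integral_spike_finite[of "{}", OF _ _ VOC_stable[OF V at]]) (auto simp: green_def)
  next
    fix b assume tb: "t \<le> b"
    show "((\<lambda>\<tau>. green L Q t \<tau> (k \<tau>)) has_integral (Q t (u t) - back_op L Q t b (Q b (u b)))) {t..b}"
    proof (cases "t = b")
      case True
      then show ?thesis using back_same by (simp add: has_integral_refl)
    next
      case False
      with tb have tb': "t < b" by simp
      have "((\<lambda>\<tau>. - back_op L Q t \<tau> (Q \<tau> (k \<tau>))) has_integral - (back_op L Q t b (Q b (u b)) - Q t (u t))) {t..b}"
        by (rule has_integral_neg[OF VOC_unstable[OF V tb']])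
      then have "((\<lambda>\<tau>. - back_op L Q t \<tau> (Q \<tau> (k \<tau>))) has_integral (Q t (u t) - back_op L Q t b (Q b (u b)))) {t..b}"
        by simp
      then show ?thesis
        by (rule has_integral_spike_finite[of "{t}", rotated 2]) (auto simp: green_def)
    qed
  qed (use r_lim[OF bd] q_lim[OF bd] in auto)
  then show ?thesis by simp
qed

end


context dich_setting begin

lemma exp_int_stable: "a \<le> t \<Longrightarrow> ((\<lambda>\<tau>. exp (- \<alpha> * (t - \<tau>))) has_integral (1 - exp (- \<alpha> * (t - a))) / \<alpha>) {a..t}"
proof -
  assume at: "a \<le> t"
  have "((\<lambda>\<tau>. exp (- \<alpha> * (t - \<tau>))) has_integral (exp (- \<alpha> * (t - t)) / \<alpha> - exp (- \<alpha> * (t - a)) / \<alpha>)) {a..t}"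
    using at \<alpha>0
    by (intro fundamental_theorem_of_calculus)
       (auto intro!: derivative_eq_intros simp flip: has_real_derivative_iff_has_vector_derivative)
  then show ?thesis by (simp add: diff_divide_distrib)
qed

lemma exp_int_unstable: "t \<le> b \<Longrightarrow> ((\<lambda>\<tau>. exp (\<alpha> * (t - \<tau>))) has_integral (1 - exp (\<alpha> * (t - b))) / \<alpha>) {t..b}"
proof -
  assume tb: "t \<le> b"
  have "((\<lambda>\<tau>. exp (\<alpha> * (t - \<tau>))) has_integral (- exp (\<alpha> * (t - b)) / \<alpha> - (- exp (\<alpha> * (t - t)) / \<alpha>))) {t..b}"
    using tb \<alpha>0
    by (intro fundamental_theorem_of_calculus)
       (auto intro!: derivative_eq_intros simp flip: has_real_derivative_iff_has_vector_derivative)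
  then show ?thesis by (simp add: diff_divide_distrib)
qed

lemma stable_est:
  assumes V: "VOC u k" and bd: "\<And>\<tau>. norm (u \<tau>) \<le> \<Phi>"
    and kb: "\<And>\<tau>. exp (\<nu> * \<bar>\<tau>\<bar>) * norm (k \<tau>) \<le> C" and C: "C \<ge> 0"
  shows "norm (u t - Q t (u t)) \<le> D * C / \<alpha>"
proof -
  have est: "norm (u t - Q t (u t)) \<le> D * C / \<alpha> + norm (L t a (u a - Q a (u a)))" if at: "a \<le> t" for a
  proof -
    define I where "I = u t - Q t (u t) - L t a (u a - Q a (u a))"
    have hI: "((\<lambda>\<tau>. L t \<tau> (k \<tau> - Q \<tau> (k \<tau>))) has_integral I) {a..t}"
      unfolding I_def by (rule VOC_stable[OF V at])
    have hE: "((\<lambda>\<tau>. D * C * exp (- \<alpha> * (t - \<tau>))) has_integral D * C * ((1 - exp (- \<alpha> * (t - a))) / \<alpha>)) {a..t}"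
      by (rule has_integral_mult_right[OF exp_int_stable[OF at]])
    have "norm I = norm (integral {a..t} (\<lambda>\<tau>. L t \<tau> (k \<tau> - Q \<tau> (k \<tau>))))"
      using hI by (simp add: integral_unique)
    also have "\<dots> \<le> integral {a..t} (\<lambda>\<tau>. D * C * exp (- \<alpha> * (t - \<tau>)))"
    proof (rule integral_norm_bound_integral)
      show "(\<lambda>\<tau>. L t \<tau> (k \<tau> - Q \<tau> (k \<tau>))) integrable_on {a..t}" using hI by blast
      show "(\<lambda>\<tau>. D * C * exp (- \<alpha> * (t - \<tau>))) integrable_on {a..t}" using hE by blast
      fix \<tau> assume "\<tau> \<in> {a..t}"
      then have \<tau>t: "\<tau> \<le> t" by simp
      have "norm (L t \<tau> (k \<tau> - Q \<tau> (k \<tau>))) \<le> D * exp (\<nu> * \<bar>\<tau>\<bar>) * exp (- \<alpha> * (t - \<tau>)) * norm (k \<tau>)"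
        by (rule stable_bound[OF \<tau>t])
      also have "\<dots> = D * exp (- \<alpha> * (t - \<tau>)) * (exp (\<nu> * \<bar>\<tau>\<bar>) * norm (k \<tau>))" by (simp add: algebra_simps)
      also have "\<dots> \<le> D * exp (- \<alpha> * (t - \<tau>)) * C"
        using kb[of \<tau>] D1 by (intro mult_left_mono) auto
      finally show "norm (L t \<tau> (k \<tau> - Q \<tau> (k \<tau>))) \<le> D * C * exp (- \<alpha> * (t - \<tau>))" by (simp add: algebra_simps)
    qed
    also have "\<dots> = D * C * ((1 - exp (- \<alpha> * (t - a))) / \<alpha>)" by (rule integral_unique[OF hE])
    also have "\<dots> \<le> D * C * (1 / \<alpha>)"
      using D1 C \<alpha>0 by (intro mult_left_mono divide_right_mono) auto
    finally have "norm I \<le> D * C / \<alpha>" by simp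
    moreover have "u t - Q t (u t) = I + L t a (u a - Q a (u a))" by (simp add: I_def)
    then have "norm (u t - Q t (u t)) \<le> norm I + norm (L t a (u a - Q a (u a)))"
      by (simp only: norm_triangle_ineq)
    ultimately show ?thesis by linarith
  qed
  have "((\<lambda>a. D * C / \<alpha> + norm (L t a (u a - Q a (u a)))) \<longlongrightarrow> D * C / \<alpha> + 0) at_bot"
    by (intro tendsto_add tendsto_const tendsto_norm_zero r_lim[OF bd])
  then have lim: "((\<lambda>a. D * C / \<alpha> + norm (L t a (u a - Q a (u a)))) \<longlongrightarrow> D * C / \<alpha>) at_bot" by simp
  show ?thesis
    by (rule tendsto_lowerbound[OF lim])
       (use est in \<open>auto simp: eventually_at_bot_linorder intro!: exI[of _ t]\<close>)
qed

lemma unstable_est: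
  assumes V: "VOC u k" and bd: "\<And>\<tau>. norm (u \<tau>) \<le> \<Phi>"
    and kb: "\<And>\<tau>. exp (\<nu> * \<bar>\<tau>\<bar>) * norm (k \<tau>) \<le> C" and C: "C \<ge> 0"
  shows "norm (Q t (u t)) \<le> D * C / \<alpha>"
proof -
  have est: "norm (Q t (u t)) \<le> D * C / \<alpha> + norm (back_op L Q t b (Q b (u b)))" if tb: "t < b" for b
  proof -
    define I where "I = back_op L Q t b (Q b (u b)) - Q t (u t)"
    have hI0: "((\<lambda>\<tau>. back_op L Q t \<tau> (Q \<tau> (k \<tau>))) has_integral I) {t..b}"
      unfolding I_def by (rule VOC_unstable[OF V tb])
    have hI: "((\<lambda>\<tau>. if \<tau> = t then 0 else back_op L Q t \<tau> (Q \<tau> (k \<tau>))) has_integral I) {t..b}"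
      by (rule has_integral_spike_finite[of "{t}", OF _ _ hI0]) auto
    have hE: "((\<lambda>\<tau>. D * C * exp (\<alpha> * (t - \<tau>))) has_integral D * C * ((1 - exp (\<alpha> * (t - b))) / \<alpha>)) {t..b}"
      by (rule has_integral_mult_right[OF exp_int_unstable]) (use tb in simp)
    have "norm I = norm (integral {t..b} (\<lambda>\<tau>. if \<tau> = t then 0 else back_op L Q t \<tau> (Q \<tau> (k \<tau>))))"
      using hI by (simp add: integral_unique)
    also have "\<dots> \<le> integral {t..b} (\<lambda>\<tau>. D * C * exp (\<alpha> * (t - \<tau>)))"
    proof (rule integral_norm_bound_integral)
      show "(\<lambda>\<tau>. if \<tau> = t then 0 else back_op L Q t \<tau> (Q \<tau> (k \<tau>))) integrable_on {t..b}" using hI by blast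
      show "(\<lambda>\<tau>. D * C * exp (\<alpha> * (t - \<tau>))) integrable_on {t..b}" using hE by blast
      fix \<tau> assume \<tau>: "\<tau> \<in> {t..b}"
      show "norm (if \<tau> = t then 0 else back_op L Q t \<tau> (Q \<tau> (k \<tau>))) \<le> D * C * exp (\<alpha> * (t - \<tau>))"
      proof (cases "\<tau> = t")
        case True then show ?thesis using D1 C by simp
      next
        case False
        with \<tau> have t\<tau>: "t < \<tau>" by simp
        have "norm (back_op L Q t \<tau> (Q \<tau> (k \<tau>))) \<le> D * exp (\<nu> * \<bar>\<tau>\<bar>) * exp (\<alpha> * (t - \<tau>)) * norm (k \<tau>)"
          by (rule unstable_bound[OF t\<tau>])
        also have "\<dots> = D * exp (\<alpha> * (t - \<tau>)) * (exp (\<nu> * \<bar>\<tau>\<bar>) * norm (k \<tau>))" by (simp add: algebra_simps)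
        also have "\<dots> \<le> D * exp (\<alpha> * (t - \<tau>)) * C"
          using kb[of \<tau>] D1 by (intro mult_left_mono) auto
        finally show ?thesis using False by (simp add: algebra_simps)
      qed
    qed
    also have "\<dots> = D * C * ((1 - exp (\<alpha> * (t - b))) / \<alpha>)" by (rule integral_unique[OF hE])
    also have "\<dots> \<le> D * C * (1 / \<alpha>)"
      using D1 C \<alpha>0 by (intro mult_left_mono divide_right_mono) auto
    finally have "norm I \<le> D * C / \<alpha>" by simp
    moreover have "Q t (u t) = back_op L Q t b (Q b (u b)) - I" by (simp add: I_def)
    then have "norm (Q t (u t)) \<le> norm (back_op L Q t b (Q b (u b))) + norm I"
      by (simp only: norm_triangle_ineq4)
    ultimately show ?thesis by linarith
  qed
  have "((\<lambda>b. D * C / \<alpha> + norm (back_op L Q t b (Q b (u b)))) \<longlongrightarrow> D * C / \<alpha> + 0) at_top"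
    by (intro tendsto_add tendsto_const tendsto_norm_zero q_lim[OF bd])
  then have lim: "((\<lambda>b. D * C / \<alpha> + norm (back_op L Q t b (Q b (u b)))) \<longlongrightarrow> D * C / \<alpha>) at_top" by simp
  show ?thesis
    by (rule tendsto_lowerbound[OF lim])
       (use est in \<open>auto simp: eventually_at_top_linorder intro!: exI[of _ "t + 1"]\<close>)
qed

end


context dich_setting begin

lemma partB:
  assumes rho: "((rho f Df \<xi> \<nu>) \<longlongrightarrow> 0) (at_right 0)"
  shows "\<exists>\<epsilon>>0. \<forall>\<phi>. global_solution S \<phi> \<and> bounded (range \<phi>) \<and>
                       (\<forall>t. norm (\<phi> t - \<xi> t) \<le> \<epsilon>) \<longrightarrow> \<phi> = \<xi>"
proof -
  define c where "c = \<alpha> / (4 * D)"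
  have c: "c > 0" using \<alpha>0 D1 by (simp add: c_def)
  have "\<forall>\<^sub>F \<epsilon> in at_right 0. rho f Df \<xi> \<nu> \<epsilon> < ereal c"
    by (rule order_tendstoD(2)[OF rho]) (use c in simp)
  then obtain b where b: "b > 0" "\<And>y. 0 < y \<Longrightarrow> y < b \<Longrightarrow> rho f Df \<xi> \<nu> y < ereal c"
    by (auto simp: eventually_at_right_field)
  define \<epsilon> where "\<epsilon> = b / 2"
  have \<epsilon>: "\<epsilon> > 0" "rho f Df \<xi> \<nu> \<epsilon> < ereal c" using b by (auto simp: \<epsilon>_def)
  have pw: "exp (\<nu> * \<bar>t\<bar>) * norm (f t (\<xi> t + x) - f t (\<xi> t) - Df t (\<xi> t) x) \<le> c * norm x"
    if x: "norm x \<le> \<epsilon>" for t x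
  proof (cases "x = 0")
    case True then show ?thesis by simp
  next
    case False
    have "ereal (exp (\<nu> * \<bar>t\<bar>) * norm (f t (\<xi> t + x) - f t (\<xi> t) - Df t (\<xi> t) x) / norm x)
          \<le> rho f Df \<xi> \<nu> \<epsilon>"
      unfolding rho_def
      by (rule SUP_upper2[of "(t, x)"]) (use False x in auto)
    also have "\<dots> < ereal c" by (rule \<epsilon>(2))
    finally have "exp (\<nu> * \<bar>t\<bar>) * norm (f t (\<xi> t + x) - f t (\<xi> t) - Df t (\<xi> t) x) / norm x < c"
      by simp
    then show ?thesis using False by (simp add: divide_less_eq)
  qed
  show ?thesis
  proof (intro exI[of _ \<epsilon>] conjI allI impI \<epsilon>(1))
    fix \<phi> assume H: "global_solution S \<phi> \<and> bounded (range \<phi>) \<and> (\<forall>t. norm (\<phi> t - \<xi> t) \<le> \<epsilon>)"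
    define \<psi> where "\<psi> \<tau> = \<phi> \<tau> - \<xi> \<tau>" for \<tau>
    define k where "k \<tau> = gf \<phi> \<tau> - gf \<xi> \<tau>" for \<tau>
    have V: "VOC \<psi> k" unfolding \<psi>_def k_def
      by (rule VOC_diff[OF VOC_sol VOC_sol]) (use H \<xi>_sol in auto)
    have \<psi>\<epsilon>: "norm (\<psi> \<tau>) \<le> \<epsilon>" for \<tau> using H by (simp add: \<psi>_def)
    have keq: "k \<tau> = f \<tau> (\<xi> \<tau> + \<psi> \<tau>) - f \<tau> (\<xi> \<tau>) - Df \<tau> (\<xi> \<tau>) (\<psi> \<tau>)" for \<tau>
      by (simp add: k_def gf_def \<psi>_def blinfun.diff_right)
    define \<Psi> where "\<Psi> = (SUP \<tau>. norm (\<psi> \<tau>))"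
    have bdd: "bdd_above (range (\<lambda>\<tau>. norm (\<psi> \<tau>)))" by (intro bdd_aboveI2[where M = \<epsilon>] \<psi>\<epsilon>)
    have \<psi>\<Psi>: "norm (\<psi> \<tau>) \<le> \<Psi>" for \<tau> unfolding \<Psi>_def by (rule cSUP_upper[OF _ bdd]) simp
    have \<Psi>0: "\<Psi> \<ge> 0" using \<psi>\<Psi>[of 0] norm_ge_zero order_trans by blast
    have kb: "exp (\<nu> * \<bar>\<tau>\<bar>) * norm (k \<tau>) \<le> c * \<Psi>" for \<tau>
    proof -
      have "exp (\<nu> * \<bar>\<tau>\<bar>) * norm (k \<tau>) \<le> c * norm (\<psi> \<tau>)" unfolding keq by (rule pw[OF \<psi>\<epsilon>])
      also have "\<dots> \<le> c * \<Psi>" using c \<psi>\<Psi>[of \<tau>] by (intro mult_left_mono) auto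
      finally show ?thesis .
    qed
    have cP: "c * \<Psi> \<ge> 0" using c \<Psi>0 by simp
    have half: "norm (\<psi> t) \<le> \<Psi> / 2" for t
    proof -
      have "norm (\<psi> t) \<le> norm (\<psi> t - Q t (\<psi> t)) + norm (Q t (\<psi> t))"
        by (metis diff_add_cancel norm_triangle_ineq)
      also have "\<dots> \<le> D * (c * \<Psi>) / \<alpha> + D * (c * \<Psi>) / \<alpha>"
        by (intro add_mono stable_est[OF V \<psi>\<epsilon> kb cP] unstable_est[OF V \<psi>\<epsilon> kb cP])
      also have "\<dots> = \<Psi> / 2" using \<alpha>0 D1 by (simp add: c_def field_simps)
      finally show ?thesis .
    qed
    have "\<Psi> \<le> \<Psi> / 2" unfolding \<Psi>_def[of] by (rule cSUP_least) (use half \<Psi>_def in auto)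
    then have "\<Psi> \<le> 0" by simp
    then have "\<psi> \<tau> = 0" for \<tau> using \<psi>\<Psi>[of \<tau>] by (metis norm_le_zero_iff order_trans)
    then show "\<phi> = \<xi>" by (auto simp: \<psi>_def)
  qed
qed

end

theorem mainTheorem10:
  fixes T :: "real \<Rightarrow> real \<Rightarrow> 'a::banach \<Rightarrow>\<^sub>L 'a"
    and f :: "real \<Rightarrow> 'a \<Rightarrow> 'a"
    and Df :: "real \<Rightarrow> 'a \<Rightarrow> 'a \<Rightarrow>\<^sub>L 'a"
    and S :: "real \<Rightarrow> real \<Rightarrow> 'a \<Rightarrow> 'a"
    and \<xi> :: "real \<Rightarrow> 'a"
    and L :: "real \<Rightarrow> real \<Rightarrow> 'a \<Rightarrow>\<^sub>L 'a"
    and Q :: "real \<Rightarrow> 'a \<Rightarrow>\<^sub>L 'a"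
    and D \<nu> \<alpha> :: real
  assumes T_proc: "linear_evolution_process T"
    and f_cont: "continuous_on UNIV (\<lambda>(t, x). f t x)"
    and f_deriv: "\<And>t x. (f t has_derivative blinfun_apply (Df t x)) (at x)"
    and Df_cont: "continuous_on UNIV (\<lambda>(t, x). Df t x)"
    and S_proc: "evolution_process S"
    and S_mild_int: "\<And>t s y. s \<le> t \<Longrightarrow> (\<lambda>\<tau>. T t \<tau> (f \<tau> (S \<tau> s y))) integrable_on {s..t}"
    and S_mild: "\<And>t s y. s \<le> t \<Longrightarrow>
                   S t s y = T t s y + integral {s..t} (\<lambda>\<tau>. T t \<tau> (f \<tau> (S \<tau> s y)))"
    and \<xi>_sol: "global_solution S \<xi>"
    and L_proc: "linear_evolution_process L"
    and L_int: "\<And>t s x. s \<le> t \<Longrightarrow> (\<lambda>\<tau>. T t \<tau> (Df \<tau> (\<xi> \<tau>) (L \<tau> s x))) integrable_on {s..t}"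
    and L_eq: "\<And>t s x. s \<le> t \<Longrightarrow>
                 L t s x = T t s x + integral {s..t} (\<lambda>\<tau>. T t \<tau> (Df \<tau> (\<xi> \<tau>) (L \<tau> s x)))"
    and dich: "nonuniform_exp_dichotomy L Q D \<nu> \<alpha>"
    and \<alpha>\<nu>: "\<alpha> > \<nu>"
  shows "(\<forall>\<phi>. global_solution S \<phi> \<and> bounded (range \<phi>) \<longrightarrow>
            (\<forall>t. ((\<lambda>\<tau>. green L Q t \<tau> (f \<tau> (\<phi> \<tau>) - Df \<tau> (\<xi> \<tau>) (\<phi> \<tau>))) has_integral \<phi> t) UNIV))
       \<and> (bounded (range \<xi>) \<and> ((rho f Df \<xi> \<nu>) \<longlongrightarrow> 0) (at_right 0) \<longrightarrow>
            (\<exists>\<epsilon>>0. \<forall>\<phi>. global_solution S \<phi> \<and> bounded (range \<phi>) \<and>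
                       (\<forall>t. norm (\<phi> t - \<xi> t) \<le> \<epsilon>) \<longrightarrow> \<phi> = \<xi>))"
proof -
  interpret dich_setting T f Df S \<xi> L Q D \<nu> \<alpha>
    by unfold_locales (use assms in auto)
  show ?thesis
  proof (intro conjI allI impI)
    fix \<phi> t assume H: "global_solution S \<phi> \<and> bounded (range \<phi>)"
    then obtain \<Phi> where \<Phi>: "\<And>\<tau>. norm (\<phi> \<tau>) \<le> \<Phi>" by (auto simp: bounded_iff)
    show "((\<lambda>\<tau>. green L Q t \<tau> (f \<tau> (\<phi> \<tau>) - Df \<tau> (\<xi> \<tau>) (\<phi> \<tau>))) has_integral \<phi> t) UNIV"
      using partA[where u = \<phi> and k = "gf \<phi>" and t = t, OF VOC_sol \<Phi>] H by (simp add: gf_def)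
  next
    assume "bounded (range \<xi>) \<and> ((rho f Df \<xi> \<nu>) \<longlongrightarrow> 0) (at_right 0)"
    then show "\<exists>\<epsilon>>0. \<forall>\<phi>. global_solution S \<phi> \<and> bounded (range \<phi>) \<and>
                       (\<forall>t. norm (\<phi> t - \<xi> t) \<le> \<epsilon>) \<longrightarrow> \<phi> = \<xi>"
      using partB by blast
  qed
qed


end
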